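(* Let $A\in\mathbb Z^{d\times n}$ with $\ker(A)\cap\mathbb N^n=\{0\}$. Then the universal distance-reducing Markov basis $\mathcal D(A)$ and the universal strongly distance-reducing Markov basis $\mathcal D^s(A)$ are finite sets.
   Context: For $z\in\mathbb Z^n$, $z^\pm\in\mathbb N^n$ are the unique vectors with disjoint supports and $z=z^+-z^-$; $\|\cdot\|$ is the $1$-norm. For nonzero $z\in\ker(A)$: $u\in\ker(A)$ reduces $z$ from $z^+$ if some $\varepsilon\in\{\pm1\}$ has $z^++\varepsilon u\in\mathbb N^n$ and $\|z^++\varepsilon u-z^-\|<\|z\|$; from $z^-$ if some $\varepsilon$ has $z^-+\varepsilon u\in\mathbb N^n$ and $\|z^+-(z^-+\varepsilon u)\|<\|z\|$. $B\subseteq\ker(A)$ is distance reducing if every nonzero $z\in\ker(A)$ is reduced from $z^+$ or from $z^-$ by some element of $B$; strongly distance reducing if every nonzero $z$ is reduced from $z^+$ by some element of $B$ and from $z^-$ by some (possibly different) element of $B$. A minimal (strongly) distance reducing Markov basis is a (strongly) distance reducing set no proper subset of which is (strongly) distance reducing. $\mathcal D(A)$ (resp. $\mathcal D^s(A)$) is the union of all minimal distance reducing (resp. minimal strongly distance reducing) Markov bases. *)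

theory Defs
  imports "HOL-Analysis.Analysis"
begin

definition kerZ :: "int ^ 'n ^ 'd \<Rightarrow> (int ^ 'n) set" where
  "kerZ A = {z. A *v z = 0}"

definition natvec :: "(int ^ 'n) set" where
  "natvec = {z. \<forall>i. z $ i \<ge> 0}"

definition posp :: "int ^ 'n \<Rightarrow> int ^ 'n" where
  "posp z = (\<chi> i. max (z $ i) 0)"

definition negp :: "int ^ 'n \<Rightarrow> int ^ 'n" where
  "negp z = (\<chi> i. max (- (z $ i)) 0)"

definition norm1 :: "int ^ 'n \<Rightarrow> int" where
  "norm1 z = (\<Sum>i\<in>UNIV. \<bar>z $ i\<bar>)"

definition reduces_pos :: "int ^ 'n \<Rightarrow> int ^ 'n \<Rightarrow> bool" where
  "reduces_pos u z \<longleftrightarrow> (\<exists>\<epsilon>\<in>{1, -1::int}.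
      posp z + \<epsilon> *s u \<in> natvec \<and> norm1 (posp z + \<epsilon> *s u - negp z) < norm1 z)"

definition reduces_neg :: "int ^ 'n \<Rightarrow> int ^ 'n \<Rightarrow> bool" where
  "reduces_neg u z \<longleftrightarrow> (\<exists>\<epsilon>\<in>{1, -1::int}.
      negp z + \<epsilon> *s u \<in> natvec \<and> norm1 (posp z - (negp z + \<epsilon> *s u)) < norm1 z)"

definition dist_reducing :: "int ^ 'n ^ 'd \<Rightarrow> (int ^ 'n) set \<Rightarrow> bool" where
  "dist_reducing A B \<longleftrightarrow> B \<subseteq> kerZ A \<and>
     (\<forall>z\<in>kerZ A. z \<noteq> 0 \<longrightarrow> (\<exists>u\<in>B. reduces_pos u z) \<or> (\<exists>u\<in>B. reduces_neg u z))"

definition strongly_dist_reducing :: "int ^ 'n ^ 'd \<Rightarrow> (int ^ 'n) set \<Rightarrow> bool" where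
  "strongly_dist_reducing A B \<longleftrightarrow> B \<subseteq> kerZ A \<and>
     (\<forall>z\<in>kerZ A. z \<noteq> 0 \<longrightarrow> (\<exists>u\<in>B. reduces_pos u z) \<and> (\<exists>u\<in>B. reduces_neg u z))"

definition minimal_dist_reducing :: "int ^ 'n ^ 'd \<Rightarrow> (int ^ 'n) set \<Rightarrow> bool" where
  "minimal_dist_reducing A B \<longleftrightarrow> dist_reducing A B \<and> (\<forall>B'. B' \<subset> B \<longrightarrow> \<not> dist_reducing A B')"

definition minimal_strongly_dist_reducing :: "int ^ 'n ^ 'd \<Rightarrow> (int ^ 'n) set \<Rightarrow> bool" where
  "minimal_strongly_dist_reducing A B \<longleftrightarrow> strongly_dist_reducing A B \<and>
     (\<forall>B'. B' \<subset> B \<longrightarrow> \<not> strongly_dist_reducing A B')"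

definition universal_DR :: "int ^ 'n ^ 'd \<Rightarrow> (int ^ 'n) set" where
  "universal_DR A = \<Union>{B. minimal_dist_reducing A B}"

definition universal_SDR :: "int ^ 'n ^ 'd \<Rightarrow> (int ^ 'n) set" where
  "universal_SDR A = \<Union>{B. minimal_strongly_dist_reducing A B}"

end

theory Submission
  imports Defs
begin

lemma nat_sub:
  fixes t :: "nat \<Rightarrow> nat"
  shows "\<exists>q. strict_mono q \<and> incseq (\<lambda>k. t (q k))"
proof -
  obtain f where f: "strict_mono f" "monoseq (\<lambda>n. t (f n))"
    using seq_monosub[of t] by blast
  show ?thesis
  proof (cases "incseq (\<lambda>n. t (f n))")
    case True then show ?thesis using f by blast
  next
    case False
    then have dec: "decseq (\<lambda>n. t (f n))" using f(2) monoseq_iff by blast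
    define m where "m = (LEAST v. \<exists>n. t (f n) = v)"
    have "\<exists>n. t (f n) = m"
      unfolding m_def by (rule LeastI_ex[of "\<lambda>v. \<exists>n. t (f n) = v"]) blast
    then obtain N where N: "t (f N) = m" by blast
    have c: "t (f n) = m" if "n \<ge> N" for n
    proof -
      have "t (f n) \<le> t (f N)" using dec that by (simp add: decseq_def)
      moreover have "m \<le> t (f n)" unfolding m_def by (rule Least_le) blast
      ultimately show ?thesis using N by simp
    qed
    have "strict_mono (\<lambda>k. f (k + N))" using f(1) by (simp add: strict_mono_def)
    moreover have "incseq (\<lambda>k. t (f (k + N)))" using c by (simp add: incseq_def)
    ultimately show ?thesis by blast
  qed
qed

lemma dickson:
  fixes s :: "nat \<Rightarrow> 'i \<Rightarrow> nat"
  assumes "finite I"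
  shows "\<exists>r. strict_mono r \<and> (\<forall>i\<in>I. incseq (\<lambda>k. s (r k) i))"
  using assms
proof (induction I rule: finite_induct)
  case empty
  show ?case by (rule exI[of _ id]) (simp add: strict_mono_def)
next
  case (insert a I)
  then obtain r where r: "strict_mono r" "\<forall>i\<in>I. incseq (\<lambda>k. s (r k) i)" by blast
  obtain q where q: "strict_mono q" "incseq (\<lambda>k. s (r (q k)) a)"
    using nat_sub[of "\<lambda>k. s (r k) a"] by blast
  have "strict_mono (r \<circ> q)" using r(1) q(1) by (rule strict_mono_o)
  moreover have "incseq (\<lambda>k. s ((r \<circ> q) k) i)" if "i \<in> insert a I" for i
  proof (cases "i = a")
    case True
    then show ?thesis using q(2) by (simp add: o_def)
  next
    case False
    then have iI: "i \<in> I" using that by simp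
    have m: "mono q" using q(1) by (rule strict_mono_mono)
    have inc: "incseq (\<lambda>k. s (r k) i)" using r(2) iI by blast
    show ?thesis unfolding incseq_def o_def
    proof (intro allI impI)
      fix x y :: nat assume "x \<le> y"
      then have "q x \<le> q y" using m by (simp add: mono_def)
      then show "s (r (q x)) i \<le> s (r (q y)) i" using inc by (simp add: incseq_def)
    qed
  qed
  ultimately show ?case by blast
qed

definition conf :: "int ^ 'n \<Rightarrow> int ^ 'n \<Rightarrow> bool" where
  "conf g z \<longleftrightarrow> (\<forall>i. posp g $ i \<le> posp z $ i \<and> negp g $ i \<le> negp z $ i)"

lemma posp_negp: "posp z - negp z = z"
  by (simp add: posp_def negp_def vec_eq_iff max_def)

lemma coord_ineq:
  fixes g z v :: int
  assumes "max g 0 \<le> max z 0" "max (-g) 0 \<le> max (-z) 0"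
  shows "\<bar>z + v\<bar> - \<bar>z\<bar> \<le> \<bar>g + v\<bar> - \<bar>g\<bar>"
  using assms by (auto simp: max_def split: if_splits; arith)

lemma a1: fixes u g e :: int assumes "e \<in> {1,-1}" shows "\<bar>u\<bar> \<le> \<bar>g + e * u\<bar> + \<bar>g\<bar>"
  using assms by (auto; arith)
lemma a2: fixes u g e :: int assumes "e \<in> {1,-1}" shows "\<bar>u\<bar> \<le> \<bar>g - e * u\<bar> + \<bar>g\<bar>"
  using assms by (auto; arith)

lemma norm_diff_le:
  assumes "conf g z"
  shows "norm1 (z + v) - norm1 z \<le> norm1 (g + v) - norm1 g"
proof -
  have "norm1 (z + v) - norm1 z = (\<Sum>i\<in>UNIV. \<bar>z$i + v$i\<bar> - \<bar>z$i\<bar>)"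
    by (simp add: norm1_def sum_subtractf)
  also have "\<dots> \<le> (\<Sum>i\<in>UNIV. \<bar>g$i + v$i\<bar> - \<bar>g$i\<bar>)"
  proof (rule sum_mono)
    fix i
    show "\<bar>z$i + v$i\<bar> - \<bar>z$i\<bar> \<le> \<bar>g$i + v$i\<bar> - \<bar>g$i\<bar>"
      using assms by (intro coord_ineq) (auto simp: conf_def posp_def negp_def)
  qed
  also have "\<dots> = norm1 (g + v) - norm1 g"
    by (simp add: norm1_def sum_subtractf)
  finally show ?thesis .
qed

lemma conf_reduces_pos:
  assumes "conf g z" "reduces_pos w g"
  shows "reduces_pos w z"
proof -
  obtain e where e: "e \<in> {1, -1::int}" "posp g + e *s w \<in> natvec"
    "norm1 (posp g + e *s w - negp g) < norm1 g"
    using assms(2) unfolding reduces_pos_def by blast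
  have eq: "posp x + e *s w - negp x = x + e *s w" for x :: "int ^ 'a"
    using posp_negp[of x] by (metis add.commute add_diff_eq)
  have "posp z + e *s w \<in> natvec"
  proof -
    { fix i
      have "0 \<le> (posp g + e *s w)$i" using e(2) unfolding natvec_def by blast
      moreover have "posp g$i \<le> posp z$i" using assms(1) unfolding conf_def by blast
      ultimately have "0 \<le> (posp z + e *s w)$i" by simp }
    then show ?thesis unfolding natvec_def by blast
  qed
  moreover have "norm1 (posp z + e *s w - negp z) < norm1 z"
    using norm_diff_le[OF assms(1), of "e *s w"] e(3) unfolding eq by linarith
  ultimately show ?thesis using e(1) unfolding reduces_pos_def by blast
qed

lemma conf_reduces_neg:
  assumes "conf g z" "reduces_neg w g"
  shows "reduces_neg w z"
proof -
  obtain e where e: "e \<in> {1, -1::int}" "negp g + e *s w \<in> natvec"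
    "norm1 (posp g - (negp g + e *s w)) < norm1 g"
    using assms(2) unfolding reduces_neg_def by blast
  have eq: "posp x - (negp x + e *s w) = x + - (e *s w)" for x :: "int ^ 'a"
    using posp_negp[of x] by (metis diff_diff_eq diff_conv_add_uminus)
  have "negp z + e *s w \<in> natvec"
  proof -
    { fix i
      have "0 \<le> (negp g + e *s w)$i" using e(2) unfolding natvec_def by blast
      moreover have "negp g$i \<le> negp z$i" using assms(1) unfolding conf_def by blast
      ultimately have "0 \<le> (negp z + e *s w)$i" by simp }
    then show ?thesis unfolding natvec_def by blast
  qed
  moreover have "norm1 (posp z - (negp z + e *s w)) < norm1 z"
    using norm_diff_le[OF assms(1), of "- (e *s w)"] e(3) unfolding eq by linarith
  ultimately show ?thesis using e(1) unfolding reduces_neg_def by blast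
qed

lemma reduces_pos_bound:
  assumes "reduces_pos u g"
  shows "norm1 u < 2 * norm1 g"
proof -
  obtain e where e: "e \<in> {1, -1::int}"
    "norm1 (posp g + e *s u - negp g) < norm1 g"
    using assms unfolding reduces_pos_def by blast
  have eq: "posp g + e *s u - negp g = g + e *s u"
    using posp_negp[of g] by (metis add.commute add_diff_eq)
  have "norm1 u \<le> norm1 (g + e *s u) + norm1 g"
    unfolding norm1_def sum.distrib[symmetric]
  proof (rule sum_mono)
    fix i
    have "\<bar>u$i\<bar> \<le> \<bar>g$i + e * u$i\<bar> + \<bar>g$i\<bar>" by (rule a1[OF e(1)])
    then show "\<bar>u$i\<bar> \<le> \<bar>(g + e *s u)$i\<bar> + \<bar>g$i\<bar>"
      by (simp only: vector_minus_component vector_add_component vector_smult_component)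
  qed
  moreover have "norm1 (g + e *s u) < norm1 g" using e(2) by (simp only: eq)
  ultimately show ?thesis by linarith
qed

lemma reduces_neg_bound:
  assumes "reduces_neg u g"
  shows "norm1 u < 2 * norm1 g"
proof -
  obtain e where e: "e \<in> {1, -1::int}"
    "norm1 (posp g - (negp g + e *s u)) < norm1 g"
    using assms unfolding reduces_neg_def by blast
  have eq: "posp g - (negp g + e *s u) = g - e *s u"
    using posp_negp[of g] by (metis diff_diff_eq)
  have "norm1 u \<le> norm1 (g - e *s u) + norm1 g"
    unfolding norm1_def sum.distrib[symmetric]
  proof (rule sum_mono)
    fix i
    have "\<bar>u$i\<bar> \<le> \<bar>g$i - e * u$i\<bar> + \<bar>g$i\<bar>" by (rule a2[OF e(1)])
    then show "\<bar>u$i\<bar> \<le> \<bar>(g - e *s u)$i\<bar> + \<bar>g$i\<bar>"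
      by (simp only: vector_minus_component vector_add_component vector_smult_component)
  qed
  moreover have "norm1 (g - e *s u) < norm1 g" using e(2) by (simp only: eq)
  ultimately show ?thesis by linarith
qed

lemma h1: fixes a b :: int shows "nat (max a 0) \<le> nat (max b 0) \<Longrightarrow> a \<le> max b 0"
  by arith

lemma graver_bound:
  fixes K :: "(int ^ 'n) set"
  shows "\<exists>C. \<forall>z\<in>K. z \<noteq> 0 \<longrightarrow> (\<exists>g\<in>K. g \<noteq> 0 \<and> conf g z \<and> norm1 g \<le> C)"
proof (rule ccontr)
  assume H: "\<not> ?thesis"
  have "\<forall>k::nat. \<exists>z. z \<in> K \<and> z \<noteq> 0 \<and> (\<forall>g\<in>K. g \<noteq> 0 \<and> conf g z \<longrightarrow> norm1 g > int k)"
  proof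
    fix k :: nat
    from H have "\<not> (\<forall>z\<in>K. z \<noteq> 0 \<longrightarrow> (\<exists>g\<in>K. g \<noteq> 0 \<and> conf g z \<and> norm1 g \<le> int k))"
      by blast
    then show "\<exists>z. z \<in> K \<and> z \<noteq> 0 \<and> (\<forall>g\<in>K. g \<noteq> 0 \<and> conf g z \<longrightarrow> norm1 g > int k)"
      by (auto simp: not_le)
  qed
  then obtain zs where zs: "\<And>k. zs k \<in> K \<and> zs k \<noteq> 0 \<and>
      (\<forall>g\<in>K. g \<noteq> 0 \<and> conf g (zs k) \<longrightarrow> norm1 g > int k)"
    by metis
  define s where "s k p = (if snd p then nat (posp (zs k) $ fst p) else nat (negp (zs k) $ fst p))"
    for k and p :: "'n \<times> bool"
  obtain r where r: "strict_mono r" "\<forall>p\<in>UNIV. incseq (\<lambda>k. s (r k) p)"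
    using dickson[of "UNIV :: ('n \<times> bool) set" s] by auto
  have cf: "conf (zs (r 0)) (zs (r k))" for k
    unfolding conf_def
  proof
    fix i
    have "s (r 0) (i, True) \<le> s (r k) (i, True)" "s (r 0) (i, False) \<le> s (r k) (i, False)"
      using r(2) by (simp_all add: incseq_def)
    then show "posp (zs (r 0)) $ i \<le> posp (zs (r k)) $ i \<and> negp (zs (r 0)) $ i \<le> negp (zs (r k)) $ i"
      unfolding s_def by (simp add: posp_def negp_def h1)
  qed
  have big: "norm1 (zs (r 0)) > int k" for k
  proof -
    have "norm1 (zs (r 0)) > int (r k)" using zs[of "r k"] zs[of "r 0"] cf[of k] by blast
    moreover have "k \<le> r k" using seq_suble[OF r(1)] by blast
    ultimately show ?thesis by linarith
  qed
  from big[of "nat (norm1 (zs (r 0)))"] show False by linarith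
qed

lemma finite_bounded: "finite {u :: int ^ 'n. norm1 u < M}"
proof -
  have sub: "{u :: int ^ 'n. norm1 u < M} \<subseteq> vec_nth -` (PiE UNIV (\<lambda>_. {-M..M}))"
  proof
    fix u :: "int ^ 'n" assume "u \<in> {u. norm1 u < M}"
    then have lt: "norm1 u < M" by simp
    have "\<bar>u $ i\<bar> \<le> norm1 u" for i
      unfolding norm1_def by (rule member_le_sum) auto
    then have "u $ i \<in> {-M..M}" for i using lt by (smt (verit) atLeastAtMost_iff abs_ge_self abs_ge_minus_self)
    then show "u \<in> vec_nth -` (PiE UNIV (\<lambda>_. {-M..M}))"
      by (auto simp: PiE_def Pi_def extensional_def)
  qed
  have "finite (vec_nth -` (PiE UNIV (\<lambda>_. {-M..M})) :: (int ^ 'n) set)"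
    by (rule finite_vimageI) (auto intro: finite_PiE simp: inj_def vec_eq_iff)
  then show ?thesis using sub by (rule finite_subset[rotated])
qed

theorem corollary8p17:
  fixes A :: "int ^ 'n ^ 'd"
  assumes "kerZ A \<inter> natvec = {0}"
  shows "finite (universal_DR A) \<and> finite (universal_SDR A)"
proof -
  obtain C where C: "\<And>z. z \<in> kerZ A \<Longrightarrow> z \<noteq> 0 \<Longrightarrow> (\<exists>g\<in>kerZ A. g \<noteq> 0 \<and> conf g z \<and> norm1 g \<le> C)"
    using graver_bound[of "kerZ A"] by blast
  have DR: "universal_DR A \<subseteq> {u. norm1 u < 2 * C}"
  proof
    fix u assume "u \<in> universal_DR A"
    then obtain B where mB: "minimal_dist_reducing A B" and uB: "u \<in> B"
      unfolding universal_DR_def by blast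
    have drB: "dist_reducing A B" using mB unfolding minimal_dist_reducing_def by blast
    have "B - {u} \<subset> B" using uB by blast
    then have ndr: "\<not> dist_reducing A (B - {u})" using mB unfolding minimal_dist_reducing_def by blast
    have BK: "B \<subseteq> kerZ A" using drB unfolding dist_reducing_def by blast
    then have "B - {u} \<subseteq> kerZ A" by blast
    then obtain z where z: "z \<in> kerZ A" "z \<noteq> 0"
      "\<not> (\<exists>w\<in>B - {u}. reduces_pos w z)" "\<not> (\<exists>w\<in>B - {u}. reduces_neg w z)"
      using ndr unfolding dist_reducing_def by blast
    obtain g where g: "g \<in> kerZ A" "g \<noteq> 0" "conf g z" "norm1 g \<le> C" using C[OF z(1,2)] by blast
    have "(\<exists>w\<in>B. reduces_pos w g) \<or> (\<exists>w\<in>B. reduces_neg w g)"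
      using drB g(1,2) unfolding dist_reducing_def by blast
    then have "norm1 u < 2 * norm1 g"
    proof
      assume "\<exists>w\<in>B. reduces_pos w g"
      then obtain w where w: "w \<in> B" "reduces_pos w g" by blast
      then have "reduces_pos w z" using conf_reduces_pos[OF g(3)] by blast
      then have "w = u" using z(3) w(1) by blast
      then show ?thesis using w(2) reduces_pos_bound by blast
    next
      assume "\<exists>w\<in>B. reduces_neg w g"
      then obtain w where w: "w \<in> B" "reduces_neg w g" by blast
      then have "reduces_neg w z" using conf_reduces_neg[OF g(3)] by blast
      then have "w = u" using z(4) w(1) by blast
      then show ?thesis using w(2) reduces_neg_bound by blast
    qed
    then show "u \<in> {u. norm1 u < 2 * C}" using g(4) by simp
  qed
  have SDR: "universal_SDR A \<subseteq> {u. norm1 u < 2 * C}"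
  proof
    fix u assume "u \<in> universal_SDR A"
    then obtain B where mB: "minimal_strongly_dist_reducing A B" and uB: "u \<in> B"
      unfolding universal_SDR_def by blast
    have drB: "strongly_dist_reducing A B" using mB unfolding minimal_strongly_dist_reducing_def by blast
    have "B - {u} \<subset> B" using uB by blast
    then have ndr: "\<not> strongly_dist_reducing A (B - {u})"
      using mB unfolding minimal_strongly_dist_reducing_def by blast
    have BK: "B \<subseteq> kerZ A" using drB unfolding strongly_dist_reducing_def by blast
    then have "B - {u} \<subseteq> kerZ A" by blast
    then obtain z where z: "z \<in> kerZ A" "z \<noteq> 0"
      "\<not> (\<exists>w\<in>B - {u}. reduces_pos w z) \<or> \<not> (\<exists>w\<in>B - {u}. reduces_neg w z)"
      using ndr unfolding strongly_dist_reducing_def by blast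
    obtain g where g: "g \<in> kerZ A" "g \<noteq> 0" "conf g z" "norm1 g \<le> C" using C[OF z(1,2)] by blast
    have red: "(\<exists>w\<in>B. reduces_pos w g) \<and> (\<exists>w\<in>B. reduces_neg w g)"
      using drB g(1,2) unfolding strongly_dist_reducing_def by blast
    from z(3) have "norm1 u < 2 * norm1 g"
    proof
      assume nz: "\<not> (\<exists>w\<in>B - {u}. reduces_pos w z)"
      obtain w where w: "w \<in> B" "reduces_pos w g" using red by blast
      then have "reduces_pos w z" using conf_reduces_pos[OF g(3)] by blast
      then have "w = u" using nz w(1) by blast
      then show ?thesis using w(2) reduces_pos_bound by blast
    next
      assume nz: "\<not> (\<exists>w\<in>B - {u}. reduces_neg w z)"
      obtain w where w: "w \<in> B" "reduces_neg w g" using red by blast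
      then have "reduces_neg w z" using conf_reduces_neg[OF g(3)] by blast
      then have "w = u" using nz w(1) by blast
      then show ?thesis using w(2) reduces_neg_bound by blast
    qed
    then show "u \<in> {u. norm1 u < 2 * C}" using g(4) by simp
  qed
  show ?thesis using DR SDR finite_bounded[of "2 * C"] by (blast intro: finite_subset)
qed

end
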